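(* Let $E$ and $F$ be Banach spaces, let $\xi_E,\xi_F>0$, let $A\subset E$ be $\xi_E$-dense in $E$ and $B\subset F$ be $\xi_F$-dense in $F$, and let $T:A\to B$ be a surjective map satisfying $\frac{1}{M}\|x-y\|-L\le\|Tx-Ty\|\le M\|x-y\|+L$ for all $x,y\in A$ (a coarse $(M,L)$-quasi isometry from $A$ onto $B$). Then there exists a bijective coarse $\big(M,(4M^2+3)L+4\xi_F+2M\xi_E\big)$-quasi isometry $\widetilde{T}:E\to F$ such that $\|\widetilde{T}x-Tx\|\le(2M^2+2)L+2\xi_F+M\xi_E$ for all $x\in A$.
   Context: A set $S$ is $\xi$-dense in a metric space $E$ if every point of $E$ is at distance at most $\xi$ from some point of $S$. For metric spaces $E,F$, a map $T:E\to F$ is a coarse $(M,L)$-quasi isometry (with $M>0$, $L\ge0$) if $\frac{1}{M}d_E(x,y)-L\le d_F(Tx,Ty)\le M d_E(x,y)+L$ for all $x,y\in E$, and there exists $\xi>0$ such that $T(E)$ is $\xi$-dense in $F$. *)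

theory Defs
  imports "HOL-Analysis.Analysis"
begin

definition xi_dense :: "'a::metric_space set \<Rightarrow> real \<Rightarrow> bool" where
  "xi_dense S xi \<longleftrightarrow> (\<forall>x. \<exists>s\<in>S. dist x s \<le> xi)"

definition coarse_qi :: "real \<Rightarrow> real \<Rightarrow> ('a::metric_space \<Rightarrow> 'b::metric_space) \<Rightarrow> bool" where
  "coarse_qi M L T \<longleftrightarrow> M > 0 \<and> L \<ge> 0 \<and>
     (\<forall>x y. dist x y / M - L \<le> dist (T x) (T y) \<and> dist (T x) (T y) \<le> M * dist x y + L) \<and>
     (\<exists>xi>0. xi_dense (range T) xi)"

end

theory Submission
  imports Defs
begin

lemma SB_either:
  fixes f :: "'a \<Rightarrow> 'b" and g :: "'b \<Rightarrow> 'a"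
  assumes "inj f" "inj g"
  shows "\<exists>h. bij h \<and> (\<forall>x. h x = f x \<or> g (h x) = x)"
proof -
  define X where "X = lfp (\<lambda>X. UNIV - (g ` (UNIV - (f ` X))))"
  define g' where "g' = the_inv_into (UNIV - (f ` X)) g"
  let ?h = "\<lambda>z. if z \<in> X then f z else g' z"
  have X: "X = UNIV - (g ` (UNIV - (f ` X)))"
    unfolding X_def by (rule lfp_unfold) (blast intro: monoI)
  then have X_compl: "UNIV - X = g ` (UNIV - (f ` X))" by blast
  have inj2': "inj_on g (UNIV - (f ` X))" using assms(2) by (rule inj_on_subset) auto
  with X_compl have *: "g' ` (UNIV - X) = UNIV - (f ` X)" by (simp add: g'_def)
  have gback: "g (g' z) = z" if "z \<notin> X" for z
    unfolding g'_def using that X_compl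
    by (metis Diff_iff UNIV_I f_the_inv_into_f inj2')
  have surj: "?h ` UNIV = UNIV"
  proof -
    have "?h ` UNIV = ?h ` (X \<union> (UNIV - X))" by auto
    also have "\<dots> = ?h ` X \<union> ?h ` (UNIV - X)" by (simp only: image_Un)
    also have "?h ` X = f ` X" by auto
    also from * have "?h ` (UNIV - X) = UNIV - (f ` X)" by auto
    finally show ?thesis by blast
  qed
  have inj: "inj ?h"
  proof (rule injI)
    fix a b assume eq: "?h a = ?h b"
    show "a = b"
    proof (cases "a \<in> X"; cases "b \<in> X")
      assume "a \<in> X" "b \<in> X" thus ?thesis using eq assms(1) by (auto dest: injD)
    next
      assume "a \<notin> X" "b \<notin> X" thus ?thesis using eq gback by metis
    next
      assume a: "a \<in> X" "b \<notin> X"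
      then have gb: "g' b \<in> UNIV - f ` X" using * by blast
      have "f a = g' b" using eq a by simp
      thus ?thesis using gb a by (metis DiffD2 imageI)
    next
      assume a: "a \<notin> X" "b \<in> X"
      then have ga: "g' a \<in> UNIV - f ` X" using * by blast
      have "g' a = f b" using eq a by simp
      thus ?thesis using ga a by (metis DiffD2 imageI)
    qed
  qed
  have b: "bij ?h" unfolding bij_def using inj surj by blast
  have e: "?h x = f x \<or> g (?h x) = x" for x
  proof (cases "x \<in> X")
    case True thus ?thesis by simp
  next
    case False thus ?thesis using gback[OF False] by simp
  qed
  show ?thesis by (rule exI[of _ ?h], use b e in blast)
qed

lemma max_sep:
  fixes C :: "'a::metric_space set" and \<delta> :: real
  assumes dpos: "\<delta> > 0"
  shows "\<exists>S\<subseteq>C. (\<forall>s\<in>S. \<forall>t\<in>S. s \<noteq> t \<longrightarrow> dist s t \<ge> \<delta>) \<and> (\<forall>p\<in>C. \<exists>s\<in>S. dist p s < \<delta>)"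
proof -
  define Fam where "Fam = {S. S \<subseteq> C \<and> (\<forall>s\<in>S. \<forall>t\<in>S. s \<noteq> t \<longrightarrow> dist s t \<ge> \<delta>)}"
  have sepS: "dist s t \<ge> \<delta>" if "X \<in> Fam" "s \<in> X" "t \<in> X" "s \<noteq> t" for X s t
    using that unfolding Fam_def by blast
  have "\<forall>Ch\<in>chains Fam. \<Union>Ch \<in> Fam"
  proof
    fix Ch assume Ch: "Ch \<in> chains Fam"
    show "\<Union>Ch \<in> Fam"
      unfolding Fam_def
    proof (intro CollectI conjI ballI impI)
      show "\<Union>Ch \<subseteq> C" using Ch unfolding chains_def Fam_def by blast
    next
      fix s t assume "s \<in> \<Union>Ch" "t \<in> \<Union>Ch" "s \<noteq> t"
      then obtain S1 S2 where S: "S1 \<in> Ch" "S2 \<in> Ch" "s \<in> S1" "t \<in> S2" by blast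
      from Ch S have "S1 \<subseteq> S2 \<or> S2 \<subseteq> S1" unfolding chains_def chain_subset_def by blast
      moreover have "S1 \<in> Fam" "S2 \<in> Fam" using Ch S(1,2) unfolding chains_def by blast+
      ultimately show "dist s t \<ge> \<delta>" using S(3,4) \<open>s \<noteq> t\<close> sepS by blast
    qed
  qed
  from Zorn_Lemma[OF this] obtain S where S: "S \<in> Fam" and mx: "\<forall>X\<in>Fam. S \<subseteq> X \<longrightarrow> X = S" by blast
  have "\<forall>p\<in>C. \<exists>s\<in>S. dist p s < \<delta>"
  proof (rule ballI, rule ccontr)
    fix p assume p: "p \<in> C" and np: "\<not> (\<exists>s\<in>S. dist p s < \<delta>)"
    have far: "dist p s \<ge> \<delta>" "dist s p \<ge> \<delta>" if "s \<in> S" for s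
      using np that by (auto simp: not_less dist_commute)
    have "insert p S \<in> Fam" unfolding Fam_def
    proof (intro CollectI conjI ballI impI)
      show "insert p S \<subseteq> C" using S p unfolding Fam_def by blast
    next
      fix s t assume st: "s \<in> insert p S" "t \<in> insert p S" "s \<noteq> t"
      show "dist s t \<ge> \<delta>"
      proof (cases "s = p")
        case True thus ?thesis using st far by auto
      next
        case False
        show ?thesis
        proof (cases "t = p")
          case True thus ?thesis using st far False by auto
        next
          case False2: False
          thus ?thesis using st False sepS[OF S] by auto
        qed
      qed
    qed
    with mx have "insert p S = S" by blast
    hence "p \<in> S" by blast
    then have "dist p p < \<delta>" using dpos by simp
    with np \<open>p \<in> S\<close> show False by blast
  qed
  moreover have "S \<subseteq> C" using S unfolding Fam_def by blast
  moreover have "\<forall>s\<in>S. \<forall>t\<in>S. s \<noteq> t \<longrightarrow> dist s t \<ge> \<delta>" using sepS[OF S] by blast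
  ultimately show ?thesis by blast
qed

lemma ball_inj:
  fixes r :: real assumes r: "r > 0"
  shows "inj (\<lambda>y::'a::real_normed_vector. (r / (1 + norm y)) *\<^sub>R y)"
    and "norm ((r / (1 + norm (y::'a))) *\<^sub>R y) < r"
proof -
  show "inj (\<lambda>y::'a::real_normed_vector. (r / (1 + norm y)) *\<^sub>R y)"
  proof (rule injI)
    fix y z :: 'a
    assume eq: "(r / (1 + norm y)) *\<^sub>R y = (r / (1 + norm z)) *\<^sub>R z"
    have "norm ((r / (1 + norm y)) *\<^sub>R y) = norm ((r / (1 + norm z)) *\<^sub>R z)" using eq by simp
    hence "r * norm y / (1 + norm y) = r * norm z / (1 + norm z)" using r by (simp add: abs_of_pos)
    hence "r * (norm y / (1 + norm y)) = r * (norm z / (1 + norm z))" by simp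
    hence "norm y / (1 + norm y) = norm z / (1 + norm z)" using r by (metis mult_cancel_left less_irrefl)
    moreover have py: "1 + norm y > 0" by (smt (verit) norm_ge_zero)
    moreover have pz: "1 + norm z > 0" by (smt (verit) norm_ge_zero)
    ultimately have "norm y * (1 + norm z) = norm z * (1 + norm y)"
      using frac_eq_eq[of "1 + norm y" "1 + norm z" "norm y" "norm z"] by linarith
    hence nn: "norm y = norm z" by (simp add: ring_distribs mult.commute)
    have cne: "r / (1 + norm z) \<noteq> 0" using r pz by simp
    have "(r / (1 + norm z)) *\<^sub>R y = (r / (1 + norm z)) *\<^sub>R z" using eq unfolding nn .
    thus "y = z" using cne by simp
  qed
  have p1: "1 + norm y > 0" by (smt (verit) norm_ge_zero)
  have cpos: "r / (1 + norm y) > 0" using r p1 by simp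
  have "r * norm y / (1 + norm y) < r" using r p1 by (simp add: field_simps)
  hence lt: "(r / (1 + norm y)) * norm y < r" by simp
  have "norm ((r / (1 + norm (y::'a))) *\<^sub>R y) = (r / (1 + norm y)) * norm y"
    by (simp only: norm_scaleR abs_of_pos[OF cpos])
  with lt show "norm ((r / (1 + norm (y::'a))) *\<^sub>R y) < r" by linarith
qed

lemma near_inj:
  fixes f :: "'x \<Rightarrow> 'b::real_normed_vector" and \<phi> :: "'x \<Rightarrow> 'b"
  assumes inj: "inj \<phi>" and e: "\<epsilon> > 0"
  shows "\<exists>i. inj i \<and> (\<forall>x. norm (i x - f x) < \<epsilon>)"
proof -
  obtain S :: "'b set" where S: "\<forall>s\<in>S. \<forall>t\<in>S. s \<noteq> t \<longrightarrow> dist s t \<ge> 2*\<epsilon>/3"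
    and Sd: "\<forall>p. \<exists>s\<in>S. dist p s < 2*\<epsilon>/3"
    using max_sep[of "2*\<epsilon>/3" UNIV] e by auto
  define q where "q y = (SOME s. s \<in> S \<and> dist y s < 2*\<epsilon>/3)" for y
  have q: "q y \<in> S \<and> dist y (q y) < 2*\<epsilon>/3" for y
  proof -
    have "\<exists>s. s \<in> S \<and> dist y s < 2*\<epsilon>/3" using Sd by blast
    thus ?thesis unfolding q_def by (rule someI_ex)
  qed
  define \<psi> where "\<psi> y = ((\<epsilon>/3) / (1 + norm y)) *\<^sub>R y" for y :: 'b
  have e3: "\<epsilon>/3 > 0" using e by simp
  have \<psi>eq: "\<psi> = (\<lambda>y. ((\<epsilon>/3) / (1 + norm y)) *\<^sub>R y)" by (rule ext, simp only: \<psi>_def)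
  have \<psi>i: "inj \<psi>" unfolding \<psi>eq by (rule ball_inj(1)[OF e3])
  have \<psi>n: "norm (\<psi> y) < \<epsilon>/3" for y unfolding \<psi>_def by (rule ball_inj(2)[OF e3])
  define i where "i x = q (f x) + \<psi> (\<phi> x)" for x
  have "inj i"
  proof (rule injI)
    fix x x' assume eq: "i x = i x'"
    hence d: "q (f x) - q (f x') = \<psi> (\<phi> x') - \<psi> (\<phi> x)" unfolding i_def by (simp add: algebra_simps)
    have "norm (\<psi> (\<phi> x') - \<psi> (\<phi> x)) < 2*\<epsilon>/3"
      using norm_triangle_ineq4[of "\<psi> (\<phi> x')" "\<psi> (\<phi> x)"] \<psi>n[of "\<phi> x"] \<psi>n[of "\<phi> x'"] by linarith
    hence "dist (q (f x)) (q (f x')) < 2*\<epsilon>/3" using d by (simp add: dist_norm)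
    hence qq: "q (f x) = q (f x')" using S q[of "f x"] q[of "f x'"] by (meson not_le)
    hence "\<psi> (\<phi> x) = \<psi> (\<phi> x')" using eq unfolding i_def by simp
    thus "x = x'" using \<psi>i inj by (simp add: inj_eq)
  qed
  moreover have "norm (i x - f x) < \<epsilon>" for x
  proof -
    have "i x - f x = (q (f x) - f x) + \<psi> (\<phi> x)" by (simp add: i_def algebra_simps)
    hence "norm (i x - f x) \<le> norm (q (f x) - f x) + norm (\<psi> (\<phi> x))"
      by (metis norm_triangle_ineq)
    moreover have "norm (q (f x) - f x) < 2*\<epsilon>/3" using q[of "f x"] by (simp add: dist_norm norm_minus_commute)
    ultimately show ?thesis using \<psi>n[of "\<phi> x"] by linarith
  qed
  ultimately show ?thesis by blast
qed

lemma geo_bound: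
  shows "(\<lambda>n. 2 * (1/8::real)^(n + Suc k)) sums ((1/8)^k * (2/7))"
proof -
  have g: "(\<lambda>n. (1/8::real)^n) sums (1 / (1 - 1/8))" by (rule geometric_sums) simp
  have eqf: "(\<lambda>n. (2 * (1/8::real)^(Suc k)) * (1/8)^n) = (\<lambda>n. 2 * (1/8::real)^(n + Suc k))"
    by (rule ext) (simp add: power_add)
  have s1: "(\<lambda>n. 2 * (1/8::real)^(n + Suc k)) sums ((2 * (1/8)^(Suc k)) * (1 / (1 - 1/8)))"
    using sums_mult[OF g, of "2 * (1/8::real)^(Suc k)"] unfolding eqf .
  have val: "(2 * (1/8::real)^(Suc k)) * (1 / (1 - 1/8)) = (1/8)^k * (2/7)"
    by simp
  show ?thesis using s1 unfolding val .
qed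

lemma summable_bd:
  fixes d :: "nat \<Rightarrow> 'a::banach"
  assumes "\<And>k. norm (d k) \<le> 2"
  shows "summable (\<lambda>k. (1/8::real)^k *\<^sub>R d k)"
proof (rule summable_comparison_test)
  show "\<exists>N. \<forall>n\<ge>N. norm ((1/8::real)^n *\<^sub>R d n) \<le> 2 * (1/8)^n"
  proof (intro exI allI impI)
    fix n :: nat
    have "norm ((1/8::real)^n *\<^sub>R d n) = (1/8)^n * norm (d n)" by simp
    also have "\<dots> \<le> (1/8)^n * 2" using assms[of n] by (intro mult_left_mono) auto
    finally show "norm ((1/8::real)^n *\<^sub>R d n) \<le> 2 * (1/8)^n" by simp
  qed
  show "summable (\<lambda>n. 2 * (1/8::real)^n)"
    by (rule summable_mult, rule summable_geometric) simp
qed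

lemma ser_inj:
  fixes S :: "'a::banach set"
  assumes bd: "\<forall>s\<in>S. norm s \<le> 1" and sep: "\<forall>s\<in>S. \<forall>t\<in>S. s \<noteq> t \<longrightarrow> dist s t \<ge> 1/2"
  shows "inj_on (\<lambda>\<sigma>. \<Sum>k. (1/8::real)^k *\<^sub>R \<sigma> k) {\<sigma>. \<forall>k. \<sigma> k \<in> S}"
proof (rule inj_onI, rule ccontr)
  fix \<sigma> \<tau> assume \<sigma>: "\<sigma> \<in> {\<sigma>. \<forall>k. \<sigma> k \<in> S}" and \<tau>: "\<tau> \<in> {\<sigma>. \<forall>k. \<sigma> k \<in> S}"
    and eq: "(\<Sum>k. (1/8::real)^k *\<^sub>R \<sigma> k) = (\<Sum>k. (1/8::real)^k *\<^sub>R \<tau> k)"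
    and ne: "\<sigma> \<noteq> \<tau>"
  have inS: "\<sigma> k \<in> S" "\<tau> k \<in> S" for k using \<sigma> \<tau> by auto
  have nb1: "norm (\<sigma> k) \<le> 2" for k
  proof - have "norm (\<sigma> k) \<le> 1" using bd inS(1)[of k] by blast thus ?thesis by simp qed
  have nb2: "norm (\<tau> k) \<le> 2" for k
  proof - have "norm (\<tau> k) \<le> 1" using bd inS(2)[of k] by blast thus ?thesis by simp qed
  note nb = nb1 nb2
  define d where "d k = \<sigma> k - \<tau> k" for k
  have db: "norm (d k) \<le> 2" for k
  proof -
    have "norm (d k) \<le> norm (\<sigma> k) + norm (\<tau> k)" unfolding d_def by (rule norm_triangle_ineq4)
    moreover have "norm (\<sigma> k) \<le> 1" "norm (\<tau> k) \<le> 1" using bd inS[of k] by blast+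
    ultimately show ?thesis by linarith
  qed
  define u where "u k = (1/8::real)^k *\<^sub>R d k" for k
  have su: "summable u" unfolding u_def by (rule summable_bd[OF db])
  have "suminf u = (\<Sum>k. (1/8::real)^k *\<^sub>R \<sigma> k) - (\<Sum>k. (1/8::real)^k *\<^sub>R \<tau> k)"
    unfolding u_def d_def scaleR_diff_right
    by (rule suminf_diff[symmetric]; rule summable_bd; use nb in auto)
  hence u0: "suminf u = 0" using eq by simp
  have "\<exists>k. \<sigma> k \<noteq> \<tau> k" using ne by auto
  define k0 where "k0 = (LEAST k. \<sigma> k \<noteq> \<tau> k)"
  have k0: "\<sigma> k0 \<noteq> \<tau> k0" unfolding k0_def by (rule LeastI_ex) fact
  have before: "u k = 0" if "k < k0" for k
  proof -
    have "\<sigma> k = \<tau> k" using not_less_Least[OF that[unfolded k0_def]] by simp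
    thus ?thesis unfolding u_def d_def by simp
  qed
  have "sum u {..<Suc k0} = u k0" using before by (simp add: sum.neutral)
  with suminf_split_initial_segment[OF su, of "Suc k0"] u0
  have split: "0 = (\<Sum>n. u (n + Suc k0)) + u k0" by simp
  have tail: "norm (\<Sum>n. u (n + Suc k0)) \<le> (1/8)^k0 * (2/7)"
  proof -
    have "norm (\<Sum>n. u (n + Suc k0)) \<le> (\<Sum>n. 2 * (1/8::real)^(n + Suc k0))"
    proof (rule norm_suminf_le)
      fix n
      have "norm (u (n + Suc k0)) = (1/8)^(n + Suc k0) * norm (d (n + Suc k0))" unfolding u_def by simp
      also have "\<dots> \<le> (1/8)^(n + Suc k0) * 2" using db by (intro mult_left_mono) auto
      finally show "norm (u (n + Suc k0)) \<le> 2 * (1/8::real)^(n + Suc k0)" by simp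
      show "summable (\<lambda>n. 2 * (1/8::real)^(n + Suc k0))" using geo_bound sums_summable by blast
    qed
    also have "\<dots> = (1/8)^k0 * (2/7)" using geo_bound sums_unique by metis
    finally show ?thesis .
  qed
  have "dist (\<sigma> k0) (\<tau> k0) \<ge> 1/2" using sep \<sigma> \<tau> k0 by auto
  hence dk: "norm (d k0) \<ge> 1/2" unfolding d_def by (simp add: dist_norm)
  have "norm (u k0) = (1/8)^k0 * norm (d k0)" unfolding u_def by simp
  also have "\<dots> \<ge> (1/8)^k0 * (1/2)" using dk by (intro mult_left_mono) auto
  finally have uk: "norm (u k0) \<ge> (1/8)^k0 * (1/2)" .
  have "u k0 = - (\<Sum>n. u (n + Suc k0))" using split by (simp add: eq_neg_iff_add_eq_0 add.commute)
  hence "norm (u k0) = norm (\<Sum>n. u (n + Suc k0))" by simp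
  hence "(1/8::real)^k0 * (1/2) \<le> (1/8)^k0 * (2/7)" using uk tail by linarith
  moreover have "(1/8::real)^k0 > 0" by simp
  ultimately show False by simp
qed

lemma enc_inj:
  fixes S :: "'a::real_normed_vector set"
  assumes sub: "S \<subseteq> cball 0 1" and dense: "\<forall>p\<in>cball 0 1. \<exists>s\<in>S. dist p s < 1/2"
  shows "\<exists>enc :: 'a \<Rightarrow> nat \<Rightarrow> 'a. inj enc \<and> (\<forall>y k. enc y k \<in> S)"
proof -
  define pick where "pick w = (SOME s. s \<in> S \<and> dist w s < 1/2)" for w
  have pk: "pick w \<in> S \<and> dist w (pick w) < 1/2" if "w \<in> cball 0 1" for w
  proof -
    have "\<exists>s. s \<in> S \<and> dist w s < 1/2" using dense that by blast
    thus ?thesis unfolding pick_def by (rule someI_ex)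
  qed
  define \<phi> where "\<phi> w = 2 *\<^sub>R (w - pick w)" for w
  have \<phi>c: "\<phi> w \<in> cball 0 1" if "w \<in> cball 0 1" for w
  proof -
    have "norm (w - pick w) < 1/2" using pk[OF that] by (simp add: dist_norm)
    hence "norm (\<phi> w) < 1" unfolding \<phi>_def by simp
    thus ?thesis by simp
  qed
  have it: "(\<phi>^^k) z \<in> cball 0 1" if "z \<in> cball 0 1" for z k
  proof (induction k)
    case 0 show ?case using that by simp
  next
    case (Suc k) thus ?case using \<phi>c[OF Suc.IH] by simp
  qed
  define enc0 where "enc0 z k = pick ((\<phi>^^k) z)" for z k
  have diff: "z - z' = (1/2::real)^k *\<^sub>R ((\<phi>^^k) z - (\<phi>^^k) z')"
    if eq: "\<forall>k. enc0 z k = enc0 z' k" for z z' k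
  proof (induction k)
    case 0 show ?case by simp
  next
    case (Suc k)
    have pe: "pick ((\<phi>^^k) z) = pick ((\<phi>^^k) z')" using eq unfolding enc0_def by blast
    have "(\<phi>^^Suc k) z - (\<phi>^^Suc k) z' = 2 *\<^sub>R ((\<phi>^^k) z - (\<phi>^^k) z')"
      using pe by (simp add: \<phi>_def scaleR_diff_right)
    hence "(1/2::real)^Suc k *\<^sub>R ((\<phi>^^Suc k) z - (\<phi>^^Suc k) z') = (1/2::real)^k *\<^sub>R ((\<phi>^^k) z - (\<phi>^^k) z')"
      by simp
    with Suc.IH show ?case by simp
  qed
  have inj0: "z = z'" if z: "z \<in> cball 0 1" and z': "z' \<in> cball 0 1" and eq: "enc0 z = enc0 z'" for z z'
  proof (rule ccontr)
    assume ne: "z \<noteq> z'"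
    hence pos: "norm (z - z') / 2 > 0" by simp
    obtain k where k: "(1/2::real)^k < norm (z - z') / 2" using real_arch_pow_inv[OF pos, of "1/2"] by auto
    have "norm (z - z') = (1/2)^k * norm ((\<phi>^^k) z - (\<phi>^^k) z')"
      using diff[of z z' k] eq by simp
    also have "\<dots> \<le> (1/2)^k * 2"
    proof (intro mult_left_mono)
      have "norm ((\<phi>^^k) z - (\<phi>^^k) z') \<le> norm ((\<phi>^^k) z) + norm ((\<phi>^^k) z')" by (rule norm_triangle_ineq4)
      moreover have "norm ((\<phi>^^k) z) \<le> 1" "norm ((\<phi>^^k) z') \<le> 1" using it[OF z, of k] it[OF z', of k] by auto
      ultimately show "norm ((\<phi>^^k) z - (\<phi>^^k) z') \<le> 2" by linarith
    qed simp
    finally show False using k by linarith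
  qed
  define bm where "bm y = ((1::real) / (1 + norm y)) *\<^sub>R y" for y :: 'a
  have bmeq: "bm = (\<lambda>y. ((1::real) / (1 + norm y)) *\<^sub>R y)" by (rule ext, simp only: bm_def)
  have bmi: "inj bm" unfolding bmeq by (rule ball_inj(1)) simp
  have bmc: "bm y \<in> cball 0 1" for y
  proof -
    have "norm (bm y) < 1" unfolding bm_def by (rule ball_inj(2)) simp
    thus ?thesis by simp
  qed
  define enc where "enc y = enc0 (bm y)" for y
  have "inj enc"
  proof (rule injI)
    fix y y' assume "enc y = enc y'"
    hence "bm y = bm y'" using inj0[OF bmc bmc] unfolding enc_def by blast
    thus "y = y'" using bmi by (simp add: inj_eq)
  qed
  moreover have "enc y k \<in> S" for y k
    unfolding enc_def enc0_def using pk[OF it[OF bmc]] by blast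
  ultimately show ?thesis by blast
qed

lemma seq_inj: "\<exists>e :: (nat \<Rightarrow> 'a::banach) \<Rightarrow> 'a. inj e"
proof -
  obtain S :: "'a set" where Ssub: "S \<subseteq> cball 0 1"
    and sep: "\<forall>s\<in>S. \<forall>t\<in>S. s \<noteq> t \<longrightarrow> dist s t \<ge> 1/2"
    and dense: "\<forall>p\<in>cball 0 1. \<exists>s\<in>S. dist p s < 1/2"
    using max_sep[of "1/2" "cball (0::'a) 1"] by auto
  obtain enc :: "'a \<Rightarrow> nat \<Rightarrow> 'a" where ei: "inj enc" and eS: "\<forall>y k. enc y k \<in> S"
    using enc_inj[OF Ssub dense] by blast
  have bd: "\<forall>s\<in>S. norm s \<le> 1" using Ssub by auto
  define ser where "ser \<sigma> = (\<Sum>k. (1/8::real)^k *\<^sub>R \<sigma> k)" for \<sigma> :: "nat \<Rightarrow> 'a"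
  have si: "inj_on ser {\<sigma>. \<forall>k. \<sigma> k \<in> S}"
    unfolding ser_def by (rule ser_inj[OF bd sep])
  define e where "e Y = ser (\<lambda>n. enc (Y (fst (prod_decode n))) (snd (prod_decode n)))" for Y :: "nat \<Rightarrow> 'a"
  have "inj e"
  proof (rule injI)
    fix Y Y' assume eq: "e Y = e Y'"
    have "(\<lambda>n. enc (Y (fst (prod_decode n))) (snd (prod_decode n)))
        = (\<lambda>n. enc (Y' (fst (prod_decode n))) (snd (prod_decode n)))"
    proof (rule inj_onD[OF si])
      show "ser (\<lambda>n. enc (Y (fst (prod_decode n))) (snd (prod_decode n)))
        = ser (\<lambda>n. enc (Y' (fst (prod_decode n))) (snd (prod_decode n)))" using eq unfolding e_def .
    qed (use eS in auto)
    hence "enc (Y m) k = enc (Y' m) k" for m k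
      by (metis (no_types, lifting) fst_conv snd_conv prod_encode_inverse)
    hence "enc (Y m) = enc (Y' m)" for m by blast
    hence "Y m = Y' m" for m using ei by (simp add: inj_eq)
    thus "Y = Y'" by blast
  qed
  thus ?thesis by blast
qed

lemma arch_zero:
  fixes v :: "'a::real_normed_vector"
  assumes "\<forall>n::nat. real (Suc n) * norm v \<le> C"
  shows "v = 0"
proof (rule ccontr)
  assume "v \<noteq> 0"
  hence p: "norm v > 0" by simp
  obtain n :: nat where n: "C / norm v < real n" using reals_Archimedean2 by blast
  hence "C < real n * norm v" using p by (simp add: pos_divide_less_eq)
  also have "\<dots> \<le> real (Suc n) * norm v" using p by (intro mult_right_mono) auto
  finally show False using assms by (meson not_le)
qed

lemma M_ge_1:
  fixes A :: "'a::real_normed_vector set" and T :: "'a \<Rightarrow> 'b::real_normed_vector"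
  assumes M: "M > 0" and L: "L \<ge> 0"
    and dA: "\<forall>x. \<exists>c\<in>A. norm (x - c) \<le> xiE"
    and qi: "\<forall>x\<in>A. \<forall>y\<in>A. norm (x - y) / M - L \<le> norm (T x - T y)
                         \<and> norm (T x - T y) \<le> M * norm (x - y) + L"
    and ne: "(x0::'a) \<noteq> y0"
  shows "M \<ge> 1"
proof (rule ccontr)
  assume "\<not> M \<ge> 1"
  hence M1: "M < 1" by simp
  have K: "1 - M^2 > 0" using M M1 by (simp add: power2_eq_square) (smt (verit) mult_less_cancel_right2)
  have key: "norm (c - c') * (1 - M^2) \<le> 2 * L * M" if "c \<in> A" "c' \<in> A" for c c'
  proof -
    have "norm (c - c') / M - L \<le> M * norm (c - c') + L" using qi that by fastforce
    hence "norm (c - c') - L * M \<le> M * M * norm (c - c') + L * M" using M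
      by (simp add: field_simps)
    thus ?thesis by (simp add: power2_eq_square algebra_simps)
  qed
  define u where "u = sgn (x0 - y0)"
  have nu: "norm u = 1" unfolding u_def using ne by (simp add: norm_sgn)
  define R where "R = 2 * xiE + 2 * L * M / (1 - M^2) + 1"
  obtain c where c: "c \<in> A" "norm ((R *\<^sub>R u) - c) \<le> xiE" using dA by blast
  obtain c' where c': "c' \<in> A" "norm (0 - c') \<le> xiE" using dA by blast
  have xiE: "xiE \<ge> 0" using c(2) by (meson norm_ge_zero order_trans)
  have Rp: "R \<ge> 0" unfolding R_def using xiE L M K by simp
  have nR: "norm (R *\<^sub>R u) = R" using nu Rp by simp
  have t1: "norm (((R *\<^sub>R u) - c) + (c - c') + (c' - 0)) \<le> norm (((R *\<^sub>R u) - c) + (c - c')) + norm (c' - 0)"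
    by (rule norm_triangle_ineq)
  have t2: "norm (((R *\<^sub>R u) - c) + (c - c')) \<le> norm ((R *\<^sub>R u) - c) + norm (c - c')"
    by (rule norm_triangle_ineq)
  have teq: "((R *\<^sub>R u) - c) + (c - c') + (c' - 0) = R *\<^sub>R u" by simp
  have "norm (R *\<^sub>R u) \<le> norm ((R *\<^sub>R u) - c) + norm (c - c') + norm (c' - 0)"
    using t1 t2 unfolding teq by linarith
  hence "R - 2 * xiE \<le> norm (c - c')" using nR c(2) c'(2) by (simp add: norm_minus_commute)
  hence "(R - 2 * xiE) * (1 - M^2) \<le> norm (c - c') * (1 - M^2)" using K by (intro mult_right_mono) auto
  also have "\<dots> \<le> 2 * L * M" by (rule key[OF c(1) c'(1)])
  finally have "(2 * L * M / (1 - M^2) + 1) * (1 - M^2) \<le> 2 * L * M" unfolding R_def by simp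
  hence "2 * L * M + (1 - M^2) \<le> 2 * L * M" using K by (simp add: distrib_right)
  thus False using K by simp
qed

lemma tri_sub3:
  fixes x :: "'a::real_normed_vector"
  shows "norm (x - y) \<le> norm (x - u) + norm (u - v) + norm (v - y)"
  by (rule norm_diff_triangle_le[OF norm_diff_triangle_le[OF order_refl order_refl] order_refl])

theorem fact1:
  fixes A :: "'a::banach set" and B :: "'b::banach set" and T :: "'a \<Rightarrow> 'b"
    and M L xiE xiF :: real
  assumes "M > 0" and "L \<ge> 0"
    and "xiE > 0" and "xiF > 0"
    and "xi_dense A xiE" and "xi_dense B xiF"
    and "T ` A = B"
    and "\<forall>x\<in>A. \<forall>y\<in>A. norm (x - y) / M - L \<le> norm (T x - T y)
                         \<and> norm (T x - T y) \<le> M * norm (x - y) + L"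
  shows "\<exists>T'::'a \<Rightarrow> 'b. bij T' \<and>
           coarse_qi M ((4 * M^2 + 3) * L + 4 * xiF + 2 * M * xiE) T' \<and>
           (\<forall>x\<in>A. norm (T' x - T x) \<le> (2 * M^2 + 2) * L + 2 * xiF + M * xiE)"
proof -
  note M = assms(1) and L = assms(2) and xE = assms(3) and xF = assms(4) and qi = assms(8)
  have lo: "norm (c - c') / M - L \<le> norm (T c - T c')" if "c \<in> A" "c' \<in> A" for c c'
    using qi that by blast
  have up: "norm (T c - T c') \<le> M * norm (c - c') + L" if "c \<in> A" "c' \<in> A" for c c'
    using qi that by blast
  have dA: "\<forall>x. \<exists>c\<in>A. norm (x - c) \<le> xiE"
    using assms(5) unfolding xi_dense_def by (simp add: dist_norm)
  have dB: "\<forall>y. \<exists>c\<in>A. norm (y - T c) \<le> xiF"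
    using assms(6,7) unfolding xi_dense_def by (auto simp: dist_norm)
  define a where "a x = (if x \<in> A then x else SOME c. c \<in> A \<and> norm (x - c) \<le> xiE)" for x
  have aA: "a x \<in> A \<and> norm (x - a x) \<le> xiE" for x
  proof (cases "x \<in> A")
    case True thus ?thesis unfolding a_def using xE by simp
  next
    case False
    have "\<exists>c. c \<in> A \<and> norm (x - c) \<le> xiE" using dA by blast
    hence "(SOME c. c \<in> A \<and> norm (x - c) \<le> xiE) \<in> A \<and> norm (x - (SOME c. c \<in> A \<and> norm (x - c) \<le> xiE)) \<le> xiE"
      by (rule someI_ex)
    thus ?thesis unfolding a_def using False by simp
  qed
  have aid: "a x = x" if "x \<in> A" for x unfolding a_def using that by simp
  define g where "g y = (SOME c. c \<in> A \<and> norm (y - T c) \<le> xiF)" for y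
  have gA: "g y \<in> A \<and> norm (y - T (g y)) \<le> xiF" for y
  proof -
    have "\<exists>c. c \<in> A \<and> norm (y - T c) \<le> xiF" using dB by blast
    thus ?thesis unfolding g_def by (rule someI_ex)
  qed
  obtain e1 :: "(nat \<Rightarrow> 'b) \<Rightarrow> 'b" where e1: "inj e1" using seq_inj by blast
  obtain e2 :: "(nat \<Rightarrow> 'a) \<Rightarrow> 'a" where e2: "inj e2" using seq_inj by blast
  define \<phi>1 where "\<phi>1 x = e1 (\<lambda>n. T (a (real (Suc n) *\<^sub>R x)))" for x
  define \<phi>2 where "\<phi>2 y = e2 (\<lambda>n. g (real (Suc n) *\<^sub>R y))" for y
  have \<phi>1i: "inj \<phi>1"
  proof (rule injI)
    fix x x' assume "\<phi>1 x = \<phi>1 x'"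
    hence eqs: "(\<lambda>n. T (a (real (Suc n) *\<^sub>R x))) = (\<lambda>n. T (a (real (Suc n) *\<^sub>R x')))"
      unfolding \<phi>1_def using e1 by (simp add: inj_eq)
    have "real (Suc n) * norm (x - x') \<le> 2 * xiE + M * L" for n
    proof -
      let ?p = "real (Suc n) *\<^sub>R x" and ?q = "real (Suc n) *\<^sub>R x'"
      have "T (a ?p) = T (a ?q)" using eqs by meson
      hence "norm (a ?p - a ?q) / M - L \<le> 0" using lo[of "a ?p" "a ?q"] aA by simp
      hence h1: "norm (a ?p - a ?q) \<le> M * L" using M by (simp add: field_simps)
      have "norm (?p - ?q) \<le> norm (?p - a ?p) + norm (a ?p - a ?q) + norm (a ?q - ?q)"
        by (rule tri_sub3)
      moreover have "norm (?p - a ?p) \<le> xiE" "norm (a ?q - ?q) \<le> xiE"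
        using aA[of ?p] aA[of ?q] by (auto simp: norm_minus_commute)
      moreover have "norm (?p - ?q) = real (Suc n) * norm (x - x')"
        by (simp add: scaleR_diff_right[symmetric])
      ultimately show ?thesis using h1 by linarith
    qed
    hence "x - x' = 0" using arch_zero by blast
    thus "x = x'" by simp
  qed
  have \<phi>2i: "inj \<phi>2"
  proof (rule injI)
    fix y y' assume "\<phi>2 y = \<phi>2 y'"
    hence eqs: "(\<lambda>n. g (real (Suc n) *\<^sub>R y)) = (\<lambda>n. g (real (Suc n) *\<^sub>R y'))"
      unfolding \<phi>2_def using e2 by (simp add: inj_eq)
    have "real (Suc n) * norm (y - y') \<le> 2 * xiF" for n
    proof -
      let ?p = "real (Suc n) *\<^sub>R y" and ?q = "real (Suc n) *\<^sub>R y'"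
      have ge: "g ?p = g ?q" using eqs by meson
      have "norm (?p - ?q) \<le> norm (?p - T (g ?p)) + norm (T (g ?p) - ?q)"
        by (rule norm_diff_triangle_le[OF order_refl order_refl])
      moreover have "norm (?p - T (g ?p)) \<le> xiF" "norm (T (g ?p) - ?q) \<le> xiF"
        using gA[of ?p] gA[of ?q] ge by (auto simp: norm_minus_commute)
      moreover have "norm (?p - ?q) = real (Suc n) * norm (y - y')"
        by (simp add: scaleR_diff_right[symmetric])
      ultimately show ?thesis by linarith
    qed
    hence "y - y' = 0" using arch_zero by blast
    thus "y = y'" by simp
  qed
  define \<epsilon> where "\<epsilon> = xiF / (1 + M)"
  have \<epsilon>p: "\<epsilon> > 0" unfolding \<epsilon>_def using M xF by simp
  have \<epsilon>M: "\<epsilon> + M * \<epsilon> = xiF"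
  proof -
    have "\<epsilon> + M * \<epsilon> = (1 + M) * \<epsilon>" by (simp add: algebra_simps)
    also have "\<dots> = xiF" unfolding \<epsilon>_def using M by simp
    finally show ?thesis .
  qed
  obtain i where ii: "inj i" and id: "\<forall>x. norm (i x - T (a x)) < \<epsilon>"
    using near_inj[OF \<phi>1i \<epsilon>p, of "\<lambda>x. T (a x)"] by blast
  obtain j where ji: "inj j" and jd: "\<forall>y. norm (j y - g y) < \<epsilon>"
    using near_inj[OF \<phi>2i \<epsilon>p, of g] by blast
  obtain h where hb: "bij h" and hc: "\<forall>x. h x = i x \<or> j (h x) = x"
    using SB_either[OF ii ji] by blast
  have Me: "M * \<epsilon> \<ge> 0" using M \<epsilon>p by simp
  have key: "\<exists>c\<in>A. norm (x - c) \<le> xiE + \<epsilon> \<and> norm (h x - T c) \<le> xiF + \<epsilon>" for x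
  proof (cases "h x = i x")
    case True
    thus ?thesis using aA[of x] id[rule_format, of x] \<epsilon>p xF by (intro bexI[of _ "a x"]) auto
  next
    case False
    hence jx: "j (h x) = x" using hc by blast
    have "norm (x - g (h x)) < \<epsilon>" using jd[rule_format, of "h x"] jx by simp
    thus ?thesis using gA[of "h x"] xE \<epsilon>p by (intro bexI[of _ "g (h x)"]) auto
  qed
  define L' where "L' = (4 * M^2 + 3) * L + 4 * xiF + 2 * M * xiE"
  define D where "D = (2 * M^2 + 2) * L + 2 * xiF + M * xiE"
  have L'_alt: "L' = 4 * (M^2 * L) + 3 * L + 4 * xiF + 2 * (M * xiE)" unfolding L'_def by (simp add: algebra_simps)
  have D_alt: "D = 2 * (M^2 * L) + 2 * L + 2 * xiF + M * xiE" unfolding D_def by (simp add: algebra_simps)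
  have MLp: "M^2 * L \<ge> 0" using L by simp
  have MxE: "M * xiE \<ge> 0" using M xE by simp
  have L'0: "L' \<ge> 0" unfolding L'_def using MLp MxE L xF by simp
  have upper: "norm (h x - h y) \<le> M * norm (x - y) + L'" for x y
  proof -
    obtain c where c: "c \<in> A" "norm (x - c) \<le> xiE + \<epsilon>" "norm (h x - T c) \<le> xiF + \<epsilon>" using key by blast
    obtain c' where c': "c' \<in> A" "norm (y - c') \<le> xiE + \<epsilon>" "norm (h y - T c') \<le> xiF + \<epsilon>" using key by blast
    have "norm (c - c') \<le> norm (c - x) + norm (x - y) + norm (y - c')"
      by (rule tri_sub3)
    hence ncc: "norm (c - c') \<le> norm (x - y) + 2 * (xiE + \<epsilon>)" using c c' by (simp add: norm_minus_commute)
    have "M * norm (c - c') \<le> M * (norm (x - y) + 2 * (xiE + \<epsilon>))" using ncc M by (intro mult_left_mono) auto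
    hence mc: "M * norm (c - c') \<le> M * norm (x - y) + 2 * (M * xiE) + 2 * (M * \<epsilon>)" by (simp add: algebra_simps)
    have "norm (h x - h y) \<le> norm (h x - T c) + norm (T c - T c') + norm (T c' - h y)"
      by (rule tri_sub3)
    moreover have "norm (T c' - h y) \<le> xiF + \<epsilon>" using c' by (simp add: norm_minus_commute)
    ultimately show ?thesis using up[OF c(1) c'(1)] mc c(3) \<epsilon>M MLp L using L'_alt by linarith
  qed
  have lower: "norm (x - y) / M - L' \<le> norm (h x - h y)" for x y
  proof (cases "x = y")
    case True thus ?thesis using L'0 by simp
  next
    case False
    have M1: "M \<ge> 1" using M_ge_1[OF M L dA qi False] .
    obtain c where c: "c \<in> A" "norm (x - c) \<le> xiE + \<epsilon>" "norm (h x - T c) \<le> xiF + \<epsilon>" using key by blast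
    obtain c' where c': "c' \<in> A" "norm (y - c') \<le> xiE + \<epsilon>" "norm (h y - T c') \<le> xiF + \<epsilon>" using key by blast
    have "norm (x - y) \<le> norm (x - c) + norm (c - c') + norm (c' - y)"
      by (rule tri_sub3)
    hence ncc: "norm (x - y) - 2 * (xiE + \<epsilon>) \<le> norm (c - c')" using c c' by (simp add: norm_minus_commute)
    have "(norm (x - y) - 2 * (xiE + \<epsilon>)) / M \<le> norm (c - c') / M"
      using ncc M by (intro divide_right_mono) auto
    hence d1: "norm (x - y) / M - 2 * (xiE + \<epsilon>) / M \<le> norm (c - c') / M" by (simp add: diff_divide_distrib)
    have K0: "2 * (xiE + \<epsilon>) \<ge> 0" using xE \<epsilon>p by simp
    have "2 * (xiE + \<epsilon>) \<le> 2 * (xiE + \<epsilon>) * M" using K0 M1 by (simp add: mult_le_cancel_left1)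
    hence d2: "2 * (xiE + \<epsilon>) / M \<le> 2 * (xiE + \<epsilon>)" using M by (simp add: pos_divide_le_eq)
    have d3: "xiE \<le> M * xiE" "\<epsilon> \<le> M * \<epsilon>" using M1 xE \<epsilon>p by simp_all
    have "norm (T c - T c') \<le> norm (T c - h x) + norm (h x - h y) + norm (h y - T c')"
      by (rule tri_sub3)
    moreover have "norm (T c - h x) \<le> xiF + \<epsilon>" using c by (simp add: norm_minus_commute)
    ultimately have s2: "norm (c - c') / M - L - 2 * (xiF + \<epsilon>) \<le> norm (h x - h y)"
      using lo[OF c(1) c'(1)] c'(3) by (smt (verit))
    have s0: "2 * (xiE + \<epsilon>) / M + L + 2 * (xiF + \<epsilon>) \<le> L'"
      using d2 d3 \<epsilon>M MLp L L'_alt by (smt (verit))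
    have "norm (x - y) / M - L' \<le> norm (c - c') / M - L - 2 * (xiF + \<epsilon>)"
      using d1 s0 by (smt (verit))
    with s2 show ?thesis by linarith
  qed
  have disp: "norm (h x - T x) \<le> D" if xA: "x \<in> A" for x
  proof (cases "h x = i x")
    case True
    hence "norm (h x - T x) < \<epsilon>" using id[rule_format, of x] aid[OF xA] by simp
    thus ?thesis using D_alt \<epsilon>M Me MLp MxE L xF by linarith
  next
    case False
    hence jx: "j (h x) = x" using hc by blast
    have n1: "norm (x - g (h x)) < \<epsilon>" using jd[rule_format, of "h x"] jx by simp
    have gh: "g (h x) \<in> A" using gA by blast
    have "norm (T x - T (g (h x))) \<le> M * norm (x - g (h x)) + L" by (rule up[OF xA gh])
    moreover have "M * norm (x - g (h x)) \<le> M * \<epsilon>" using n1 M by (intro mult_left_mono) auto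
    moreover have "norm (h x - T x) \<le> norm (h x - T (g (h x))) + norm (T (g (h x)) - T x)"
      by (rule norm_diff_triangle_le[OF order_refl order_refl])
    moreover have "norm (T (g (h x)) - T x) = norm (T x - T (g (h x)))" by (rule norm_minus_commute)
    moreover have "norm (h x - T (g (h x))) \<le> xiF" using gA by blast
    ultimately show ?thesis using D_alt \<epsilon>M Me MLp MxE L xF \<epsilon>p by linarith
  qed
  have cq: "coarse_qi M L' h"
    unfolding coarse_qi_def
  proof (intro conjI allI)
    show "M > 0" by fact
    show "L' \<ge> 0" by fact
    fix x y
    show "dist x y / M - L' \<le> dist (h x) (h y)" using lower by (simp add: dist_norm)
    show "dist (h x) (h y) \<le> M * dist x y + L'" using upper by (simp add: dist_norm)
  next
    have "range h = UNIV" using hb by (simp add: bij_is_surj)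
    hence "xi_dense (range h) 1" unfolding xi_dense_def by (metis UNIV_I dist_self zero_le_one)
    thus "\<exists>xi>0. xi_dense (range h) xi" by (intro exI[of _ 1]) simp
  qed
  show ?thesis using hb cq disp unfolding L'_def D_def by blast
qed

end
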